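(* Let $q$ be a prime power and let $\mathcal{L}$ be a Cameron-Liebler line class with parameter $x$ in $\mathrm{PG}(3,q)$. Suppose there is a point $P$ and a plane $\pi$ of $\mathrm{PG}(3,q)$ with $P\in\pi$ such that (1) $(\mathsf{Line}(\pi)\setminus \mathsf{Star}(P))\cap \mathcal{L}=\emptyset$, and (2) $\mathsf{Star}(P)\setminus \mathsf{Line}(\pi)\subseteq \mathcal{L}$. Then $$\mathcal{L}':=\bigl(\mathcal{L}\cup (\mathsf{Line}(\pi)\setminus \mathsf{Star}(P))\bigr)\setminus (\mathsf{Star}(P)\setminus \mathsf{Line}(\pi))$$ is a Cameron-Liebler line class in $\mathrm{PG}(3,q)$ with the same parameter $x$.
   Context: $\mathrm{PG}(3,q)$ is the 3-dimensional projective space over $\mathbb{F}_q$. A spread of $\mathrm{PG}(3,q)$ is a set of $q^2+1$ lines partitioning the point set. A set $\mathcal{L}$ of lines is a Cameron-Liebler line class with parameter $x$ if $x$ is a non-negative integer such that $|S\cap\mathcal{L}|=x$ for every spread $S$ of $\mathrm{PG}(3,q)$. For a point $P$, $\mathsf{Star}(P)$ denotes the set of all lines through $P$; for a plane $\pi$, $\mathsf{Line}(\pi)$ denotes the set of all lines contained in $\pi$. *)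

theory Defs
  imports "HOL-Analysis.Analysis"
begin

text \<open>PG(3,q) modelled as the lattice of subspaces of the vector space 'a^4 over a
finite field 'a (so q = CARD('a), automatically a prime power).
Points, lines, planes are the subspaces of (vector) dimension 1, 2, 3.
Incidence is containment.\<close>

definition pg_subspaces :: "nat \<Rightarrow> ('a::{finite,field} ^ 4) set set" where
  "pg_subspaces k = {W. vec.subspace W \<and> vec.dim W = k}"

abbreviation pg_points :: "('a::{finite,field} ^ 4) set set" where
  "pg_points \<equiv> pg_subspaces 1"

abbreviation pg_lines :: "('a::{finite,field} ^ 4) set set" where
  "pg_lines \<equiv> pg_subspaces 2"

abbreviation pg_planes :: "('a::{finite,field} ^ 4) set set" where
  "pg_planes \<equiv> pg_subspaces 3"

definition is_spread :: "('a::{finite,field} ^ 4) set set \<Rightarrow> bool" where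
  "is_spread S \<longleftrightarrow> S \<subseteq> pg_lines \<and> (\<forall>P\<in>pg_points. \<exists>!l. l \<in> S \<and> P \<subseteq> l)"

definition cameron_liebler :: "('a::{finite,field} ^ 4) set set \<Rightarrow> nat \<Rightarrow> bool" where
  "cameron_liebler L x \<longleftrightarrow> L \<subseteq> pg_lines \<and> (\<forall>S. is_spread S \<longrightarrow> card (S \<inter> L) = x)"

definition Star :: "('a::{finite,field} ^ 4) set \<Rightarrow> ('a ^ 4) set set" where
  "Star P = {l \<in> pg_lines. P \<subseteq> l}"

definition Line :: "('a::{finite,field} ^ 4) set \<Rightarrow> ('a ^ 4) set set" where
  "Line \<pi> = {l \<in> pg_lines. l \<subseteq> \<pi>}"

end

theory Submission imports Defs begin

lemma card_span_indep:
  fixes B :: "('a::{finite,field}^'n) set"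
  assumes "vec.independent B"
  shows "card (vec.span B) = CARD('a) ^ card B"
proof -
  have "finite B" using assms vec.finiteI_independent by blast
  then show ?thesis using assms
  proof (induction B rule: finite_induct)
    case empty
    then show ?case by simp
  next
    case (insert b B)
    have ind: "vec.independent B" and nb: "b \<notin> vec.span B"
      using insert.prems insert.hyps by (auto simp: vec.independent_insert)
    have eq: "vec.span (insert b B) = (\<lambda>(k,y). k *s b + y) ` ((UNIV::'a set) \<times> vec.span B)"
    proof
      show "vec.span (insert b B) \<subseteq> (\<lambda>(k,y). k *s b + y) ` ((UNIV::'a set) \<times> vec.span B)"
      proof
        fix z assume "z \<in> vec.span (insert b B)"
        then obtain k where "z - k *s b \<in> vec.span B" by (auto simp: vec.span_insert)
        then show "z \<in> (\<lambda>(k,y). k *s b + y) ` ((UNIV::'a set) \<times> vec.span B)"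
          by (intro image_eqI[of _ _ "(k, z - k *s b)"]) auto
      qed
    next
      show "(\<lambda>(k,y). k *s b + y) ` ((UNIV::'a set) \<times> vec.span B) \<subseteq> vec.span (insert b B)"
      proof (clarify)
        fix k y assume "y \<in> vec.span B"
        then show "k *s b + y \<in> vec.span (insert b B)"
          unfolding vec.span_insert by (intro CollectI exI[of _ k]) simp
      qed
    qed
    have inj: "inj_on (\<lambda>(k,y). k *s b + y) ((UNIV::'a set) \<times> vec.span B)"
    proof (rule inj_onI, clarify)
      fix k y k' y'
      assume y: "y \<in> vec.span B" and y': "y' \<in> vec.span B" and e: "k *s b + y = k' *s b + y'"
      show "k = k' \<and> y = y'"
      proof (cases "k = k'")
        case True then show ?thesis using e by simp
      next
        case False
        have "(k - k') *s b = y' - y" using e by (simp add: algebra_simps vector_sub_rdistrib)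
        hence "inverse (k - k') *s ((k - k') *s b) \<in> vec.span B"
          using y y' by (simp add: vec.span_diff vec.span_scale)
        moreover have "inverse (k - k') *s ((k - k') *s b) = b"
          using False by (simp only: vector_smult_assoc) simp
        ultimately have "b \<in> vec.span B" by simp
        then show ?thesis using nb by blast
      qed
    qed
    have "card (vec.span (insert b B)) = card ((UNIV::'a set) \<times> vec.span B)"
      unfolding eq using card_image[OF inj] by (simp add: card_cartesian_product)
    also have "\<dots> = CARD('a) * card (vec.span B)" by (simp add: card_cartesian_product)
    finally show ?case using insert.IH[OF ind] insert.hyps by simp
  qed
qed

lemma card_subspace:
  fixes W :: "('a::{finite,field}^'n) set"
  assumes "vec.subspace W"
  shows "card W = CARD('a) ^ vec.dim W"
proof -
  obtain B where B: "B \<subseteq> W" "vec.independent B" "W \<subseteq> vec.span B" "card B = vec.dim W"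
    using vec.basis_exists by blast
  have "vec.span B = W" using vec.span_subspace[OF B(1) B(3) assms] .
  then show ?thesis using card_span_indep[OF B(2)] B(4) by simp
qed

lemma card_field_ge2: "CARD('a::{finite,field}) \<ge> 2"
proof -
  have "card {0::'a, 1} \<le> CARD('a)" by (rule card_mono) auto
  then show ?thesis by simp
qed

lemma point_span:
  fixes v :: "'a::{finite,field}^4"
  assumes "v \<noteq> 0" shows "vec.span {v} \<in> pg_points"
proof -
  have "vec.independent {v}" using assms by (intro vec.independent_insertI) (auto simp: vec.span_empty vec.independent_empty)
  then have "vec.dim (vec.span {v}) = 1" by (simp add: vec.dim_eq_card_independent)
  then show ?thesis by (simp add: pg_subspaces_def vec.subspace_span)
qed

lemma spread_disj:
  fixes v :: "'a::{finite,field}^4"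
  assumes "is_spread S" "l \<in> S" "m \<in> S" "v \<noteq> 0" "v \<in> l" "v \<in> m"
  shows "l = m"
proof -
  have sl: "vec.subspace l" "vec.subspace m" using assms(1-3) by (auto simp: is_spread_def pg_subspaces_def)
  have "vec.span {v} \<subseteq> l" "vec.span {v} \<subseteq> m" using sl assms(5,6) vec.span_minimal[of "{v}"] by auto
  then show ?thesis using assms(1-3) point_span[OF assms(4)] unfolding is_spread_def by metis
qed

lemma spread_cover:
  fixes v :: "'a::{finite,field}^4"
  assumes "is_spread S" "v \<noteq> 0"
  shows "\<exists>l\<in>S. v \<in> l"
proof -
  obtain l where "l \<in> S" "vec.span {v} \<subseteq> l" using assms point_span unfolding is_spread_def by metis
  then show ?thesis using vec.span_base[of v "{v}"] by blast
qed

lemma dim_inter_ge: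
  fixes A :: "('a::{finite,field}^'n) set"
  assumes "vec.subspace A" "vec.subspace B" "vec.subspace W" "A \<subseteq> W" "B \<subseteq> W"
  shows "vec.dim A + vec.dim B \<le> vec.dim W + vec.dim (A \<inter> B)"
proof -
  have "{x + y |x y. x \<in> A \<and> y \<in> B} \<subseteq> W" using assms by (auto intro: vec.subspace_add)
  then have "vec.dim {x + y |x y. x \<in> A \<and> y \<in> B} \<le> vec.dim W" by (rule vec.dim_subset)
  then show ?thesis using vec.dim_sums_Int[OF assms(1,2)] by linarith
qed

lemma card_nz:
  fixes W :: "('a::{finite,field}^'n) set"
  assumes "vec.subspace W"
  shows "card (W - {0}) = CARD('a) ^ vec.dim W - 1"
  using card_subspace[OF assms] vec.subspace_0[OF assms] by (simp add: card_Diff_singleton)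

lemma spread_count:
  fixes S :: "('a::{finite,field}^4) set set"
  assumes "is_spread S"
  shows "CARD('a)^4 - 1 = card S * (CARD('a)^2 - 1)"
proof -
  have fin: "finite S" by (rule finite_subset[of _ UNIV]) auto
  have U: "(UNIV::('a^4) set) - {0} = (\<Union>l\<in>S. l - {0})" using spread_cover[OF assms] by blast
  have sl: "\<And>l. l \<in> S \<Longrightarrow> vec.subspace l \<and> vec.dim l = 2" using assms by (auto simp: is_spread_def pg_subspaces_def)
  have "card ((UNIV::('a^4) set) - {0}) = (\<Sum>l\<in>S. card (l - {0}))"
    unfolding U
    by (rule card_UN_disjoint[OF fin]) (auto dest: spread_disj[OF assms])
  also have "\<dots> = (\<Sum>l\<in>S. CARD('a)^2 - 1)"
  proof (intro sum.cong refl)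
    fix l assume "l \<in> S" then show "card (l - {0}) = CARD('a)^2 - 1" using sl card_nz[of l] by simp
  qed
  also have "\<dots> = card S * (CARD('a)^2 - 1)" by simp
  finally show ?thesis using card_nz[OF vec.subspace_UNIV] vec_dim_card[where 'a='a and 'n=4] by simp
qed

lemma arith_contra:
  fixes q s :: nat
  assumes "q \<ge> 2" "q^4 - 1 = s * (q^2 - 1)" "q^3 - 1 = s * (q - 1)"
  shows False
proof -
  have a: "q^4 - 1 = (q^2+1) * (q^2 - 1)" by (cases q) (simp_all add: algebra_simps power2_eq_square power4_eq_xxxx)
  have b: "q^3 - 1 = (q^2+q+1) * (q - 1)" by (cases q) (simp_all add: algebra_simps power2_eq_square power3_eq_cube)
  have p1: "q^2 - 1 > 0" using assms(1) by (metis Suc_1 Suc_le_lessD less_numeral_extra(3) less_one nat_one_le_power one_less_power pos2 zero_less_diff)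
  have p2: "q - 1 > 0" using assms(1) by simp
  have e1: "(q^2+1)*(q^2-1) = s*(q^2-1)" using a assms(2) by metis
  have e2: "(q^2+q+1)*(q-1) = s*(q-1)" using b assms(3) by metis
  have "s = q^2+1" using e1 p1 mult_right_cancel[of "q^2-1" "q^2+1" s] by simp
  moreover have "s = q^2+q+1" using e2 p2 mult_right_cancel[of "q-1" "q^2+q+1" s] by simp
  ultimately show False using assms(1) by simp
qed

lemma spread_plane:
  fixes S :: "('a::{finite,field}^4) set set"
  assumes "is_spread S" "\<pi> \<in> pg_planes"
  shows "\<exists>!m. m \<in> S \<and> m \<subseteq> \<pi>"
proof -
  have sp: "vec.subspace \<pi>" "vec.dim \<pi> = 3" using assms(2) by (auto simp: pg_subspaces_def)
  have sl: "\<And>l. l \<in> S \<Longrightarrow> vec.subspace l \<and> vec.dim l = 2" using assms by (auto simp: is_spread_def pg_subspaces_def)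
  have dU: "vec.dim (UNIV::('a^4) set) = 4" using vec_dim_card[where 'a='a and 'n=4] by simp
  have ex: "\<exists>m. m \<in> S \<and> m \<subseteq> \<pi>"
  proof (rule ccontr)
    assume no: "\<not> ?thesis"
    have fin: "finite S" by (rule finite_subset[of _ UNIV]) auto
    have d1: "vec.dim (l \<inter> \<pi>) = 1" if "l \<in> S" for l
    proof -
      have "vec.dim l + vec.dim \<pi> \<le> vec.dim (UNIV::('a^4) set) + vec.dim (l \<inter> \<pi>)"
        using sl[OF that] sp by (intro dim_inter_ge) (auto simp: vec.subspace_UNIV)
      then have ge: "vec.dim (l \<inter> \<pi>) \<ge> 1" using sl[OF that] sp dU by simp
      have "vec.dim (l \<inter> \<pi>) \<le> vec.dim l" by (rule vec.dim_subset) auto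
      moreover have "vec.dim (l \<inter> \<pi>) \<noteq> vec.dim l"
      proof
        assume "vec.dim (l \<inter> \<pi>) = vec.dim l"
        then have "l \<inter> \<pi> = l" using sl[OF that] sp
          by (intro vec.subspace_dim_equal) (auto intro: vec.subspace_inter)
        then show False using no that by blast
      qed
      ultimately show ?thesis using ge sl[OF that] by simp
    qed
    have U: "\<pi> - {0} = (\<Union>l\<in>S. l \<inter> \<pi> - {0})" using spread_cover[OF assms(1)] by blast
    have "card (\<pi> - {0}) = (\<Sum>l\<in>S. card (l \<inter> \<pi> - {0}))"
      unfolding U
      by (rule card_UN_disjoint[OF fin]) (auto dest: spread_disj[OF assms(1)])
    also have "\<dots> = (\<Sum>l\<in>S. CARD('a) - 1)"
    proof (intro sum.cong refl)
      fix l assume "l \<in> S"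
      then show "card (l \<inter> \<pi> - {0}) = CARD('a) - 1"
        using card_nz[of "l \<inter> \<pi>"] d1 sl sp by (simp add: vec.subspace_inter)
    qed
    also have "\<dots> = card S * (CARD('a) - 1)" by simp
    finally have "CARD('a)^3 - 1 = card S * (CARD('a) - 1)" using card_nz[OF sp(1)] sp(2) by simp
    then show False using arith_contra[OF card_field_ge2 spread_count[OF assms(1)]] by simp
  qed
  moreover have "l = m" if "l \<in> S" "l \<subseteq> \<pi>" "m \<in> S" "m \<subseteq> \<pi>" for l m
  proof -
    have "vec.dim l + vec.dim m \<le> vec.dim \<pi> + vec.dim (l \<inter> m)"
      using sl that sp by (intro dim_inter_ge) auto
    then have "vec.dim (l \<inter> m) \<ge> 1" using sl that sp by simp
    then have "\<not> l \<inter> m \<subseteq> {0}" using vec.dim_eq_0[of "l \<inter> m"] by (metis not_one_le_zero)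
    then obtain v where "v \<in> l" "v \<in> m" "v \<noteq> 0" by auto
    then show ?thesis using spread_disj[OF assms(1)] that by blast
  qed
  ultimately show ?thesis by blast
qed

theorem lemma1:
  fixes L :: "('a::{finite,field} ^ 4) set set" and x :: nat
    and P \<pi> :: "('a ^ 4) set"
  assumes "cameron_liebler L x"
    and "P \<in> pg_points" and "\<pi> \<in> pg_planes" and "P \<subseteq> \<pi>"
    and "(Line \<pi> - Star P) \<inter> L = {}"
    and "Star P - Line \<pi> \<subseteq> L"
  shows "cameron_liebler ((L \<union> (Line \<pi> - Star P)) - (Star P - Line \<pi>)) x"
  unfolding cameron_liebler_def
proof (intro conjI allI impI)
  show "L \<union> (Line \<pi> - Star P) - (Star P - Line \<pi>) \<subseteq> pg_lines"
    using assms(1) unfolding cameron_liebler_def Line_def by blast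
next
  fix S :: "('a^4) set set" assume S: "is_spread S"
  have cL: "card (S \<inter> L) = x" using assms(1) S unfolding cameron_liebler_def by blast
  have Sl: "S \<subseteq> pg_lines" using S unfolding is_spread_def by blast
  obtain l0 where l0: "l0 \<in> S" "P \<subseteq> l0" and l0u': "\<forall>l. l \<in> S \<and> P \<subseteq> l \<longrightarrow> l = l0"
    using S assms(2) unfolding is_spread_def by metis
  obtain m where m: "m \<in> S" "m \<subseteq> \<pi>" and mu': "\<forall>l. l \<in> S \<and> l \<subseteq> \<pi> \<longrightarrow> l = m"
    using spread_plane[OF S assms(3)] by metis
  have l0u: "l = l0" if "l \<in> S" "P \<subseteq> l" for l using l0u' that by simp
  have mu: "l = m" if "l \<in> S" "l \<subseteq> \<pi>" for l using mu' that by simp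
  have inS: "\<And>l. l \<in> S \<Longrightarrow> (l \<in> Star P \<longleftrightarrow> P \<subseteq> l) \<and> (l \<in> Line \<pi> \<longleftrightarrow> l \<subseteq> \<pi>)"
    using Sl unfolding Star_def Line_def by blast
  let ?L' = "L \<union> (Line \<pi> - Star P) - (Star P - Line \<pi>)"
  show "card (S \<inter> ?L') = x"
  proof (cases "l0 \<subseteq> \<pi>")
    case True
    have ml0: "m = l0" using mu[OF l0(1) True] by simp
    have A: "l \<notin> Line \<pi> - Star P" if "l \<in> S" for l
    proof
      assume "l \<in> Line \<pi> - Star P"
      then have "l \<subseteq> \<pi>" "\<not> P \<subseteq> l" using inS[OF that] by auto
      then show False using mu[OF that] ml0 l0(2) by simp
    qed
    have B: "l \<notin> Star P - Line \<pi>" if "l \<in> S" for l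
    proof
      assume "l \<in> Star P - Line \<pi>"
      then have "\<not> l \<subseteq> \<pi>" "P \<subseteq> l" using inS[OF that] by auto
      then show False using l0u[OF that] True by simp
    qed
    have "S \<inter> ?L' = S \<inter> L" using A B by blast
    then show ?thesis using cL by simp
  next
    case False
    have ml: "m \<noteq> l0" using False m by blast
    have mP: "\<not> P \<subseteq> m" using l0u[OF m(1)] ml by blast
    have mL: "m \<notin> L"
    proof
      assume "m \<in> L"
      have "m \<in> Line \<pi> - Star P" using inS[OF m(1)] m(2) mP by simp
      then show False using assms(5) \<open>m \<in> L\<close> by blast
    qed
    have l0L: "l0 \<in> L" using assms(6) inS[OF l0(1)] l0 False by blast
    have eq: "S \<inter> ?L' = insert m (S \<inter> L - {l0})"
    proof
      show "S \<inter> ?L' \<subseteq> insert m (S \<inter> L - {l0})"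
      proof
        fix l assume l: "l \<in> S \<inter> ?L'"
        then have lS: "l \<in> S" by blast
        show "l \<in> insert m (S \<inter> L - {l0})"
        proof (cases "l = l0")
          case True
          then have "l \<in> Star P - Line \<pi>" using inS[OF lS] l0(2) False by simp
          then show ?thesis using l by blast
        next
          case ne: False
          show ?thesis
          proof (cases "l \<in> L")
            case True then show ?thesis using lS ne by blast
          next
            case False
            then have "l \<subseteq> \<pi>" using l inS[OF lS] by blast
            then show ?thesis using mu[OF lS] by blast
          qed
        qed
      qed
      show "insert m (S \<inter> L - {l0}) \<subseteq> S \<inter> ?L'"
      proof
        fix l assume l: "l \<in> insert m (S \<inter> L - {l0})"
        then have lS: "l \<in> S" using m by blast
        show "l \<in> S \<inter> ?L'"
        proof (cases "l = m")
          case True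
          then show ?thesis using inS[OF lS] m mP lS by simp
        next
          case False
          then have "l \<in> L" "l \<noteq> l0" using l by auto
          then have "\<not> P \<subseteq> l" using l0u[OF lS] by blast
          then show ?thesis using inS[OF lS] lS \<open>l \<in> L\<close> by simp
        qed
      qed
    qed
    have fin: "finite (S \<inter> L)" by (rule finite_subset[of _ UNIV]) auto
    have "card (S \<inter> ?L') = Suc (card (S \<inter> L - {l0}))"
      unfolding eq using fin mL by (simp add: card_insert_if)
    also have "\<dots> = card (S \<inter> L)" using fin l0 l0L card_Suc_Diff1[of "S \<inter> L" l0] by simp
    finally show ?thesis using cL by simp
  qed
qed

end
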